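(* Let $\mu\in(0,1)$, $a>0$, and let $f$ satisfy $(f_1)$–$(f_3)$ as in the context. Then for every fixed integer $n\ge2$, $\max_{t\ge0}\Phi_n(t)>0$ and this maximum is attained at some $t_n>0$.
   Context: $I_\mu(x)=|x|^{-\mu}$; $f\in C(\mathbb{R},\mathbb{R})$, $F(t)=\int_0^tf(s)ds$; $\|(-\Delta)^{1/4}u\|_2^2=\frac1{2\pi}\int\int\frac{|u(x)-u(y)|^2}{|x-y|^2}dxdy$; $J(u)=\frac12\|(-\Delta)^{1/4}u\|_2^2-\frac12\int(I_\mu*F(u))F(u)dx$ on $H^{1/2}(\mathbb{R})$. For $n\ge2$ let $\varpi_n(x)=\frac{1}{\sqrt\pi}\sqrt{\log n}$ for $|x|<1/n$, $\varpi_n(x)=\frac{1}{\sqrt\pi}\frac{\log(1/|x|)}{\sqrt{\log n}}$ for $1/n\le|x|\le1$, $\varpi_n(x)=0$ for $|x|>1$, and $\omega_n=a\varpi_n/\|\varpi_n\|_2$. Define $\Phi_n(t)=J(t\,\omega_n(t^2\cdot))=\frac{t^2}{2}\|(-\Delta)^{1/4}\omega_n\|_2^2-\frac12t^{2(\mu-2)}\int(I_\mu*F(t\omega_n))F(t\omega_n)dx$ for $t>0$, and $\Phi_n(0)=J(0)=0$. Conditions: $(f_1)$ $\lim_{t\to0}|f(t)|/|t|^\kappa=0$ for some $\kappa>2-\mu$; $(f_2)$ $\lim_{|t|\to\infty}|f(t)|e^{-\alpha t^2}=0$ for $\alpha>\pi$ and $=+\infty$ for $0<\alpha<\pi$; $(f_3)$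 there is $\theta>3-\mu$ with $0<\theta F(t)\le tf(t)$ for $t\ne0$. *)

theory Defs
  imports "HOL-Analysis.Analysis"
begin

definition prim :: "(real \<Rightarrow> real) \<Rightarrow> real \<Rightarrow> real" where
  "prim f t = (if 0 \<le> t then integral {0..t} f else - integral {t..0} f)"

definition frac_seminorm_sq :: "(real \<Rightarrow> real) \<Rightarrow> real" where
  "frac_seminorm_sq u =
     (1 / (2 * pi)) * (LINT x|lborel. (LINT y|lborel. (u x - u y)^2 / (x - y)^2))"

definition choquard :: "(real \<Rightarrow> real) \<Rightarrow> real \<Rightarrow> (real \<Rightarrow> real) \<Rightarrow> real" where
  "choquard f \<mu> u =
     (LINT x|lborel. (LINT y|lborel. \<bar>x - y\<bar> powr (-\<mu>) * prim f (u y)) * prim f (u x))"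

definition varpi :: "nat \<Rightarrow> real \<Rightarrow> real" where
  "varpi n x =
     (if \<bar>x\<bar> < 1 / real n then (1 / sqrt pi) * sqrt (ln (real n))
      else if \<bar>x\<bar> \<le> 1 then (1 / sqrt pi) * ln (1 / \<bar>x\<bar>) / sqrt (ln (real n))
      else 0)"

definition L2norm :: "(real \<Rightarrow> real) \<Rightarrow> real" where
  "L2norm u = sqrt (LINT x|lborel. (u x)^2)"

definition omega :: "real \<Rightarrow> nat \<Rightarrow> real \<Rightarrow> real" where
  "omega a n x = a * varpi n x / L2norm (varpi n)"

definition Phi :: "(real \<Rightarrow> real) \<Rightarrow> real \<Rightarrow> real \<Rightarrow> nat \<Rightarrow> real \<Rightarrow> real" where
  "Phi f \<mu> a n t =
     (if t = 0 then 0
      else t^2 / 2 * frac_seminorm_sq (omega a n)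
           - 1/2 * t powr (2 * (\<mu> - 2)) * choquard f \<mu> (\<lambda>x. t * omega a n x))"

end

theory Submission
  imports Defs
begin

lemma powr0_int:
  fixes a c :: real assumes "a > -1" "c \<ge> 0"
  shows "integrable lborel (\<lambda>s. indicator {0..c} s * s powr a)"
proof -
  have "(\<lambda>s. s powr a) integrable_on {0..c}" using integrable_on_powr_from_0[OF assms] .
  then have "(\<lambda>s. s powr a) absolutely_integrable_on {0..c}"
    by (rule nonnegative_absolutely_integrable_1) auto
  then have "integrable lebesgue (\<lambda>s. indicator {0..c} s *\<^sub>R (s powr a))"
    unfolding set_integrable_def .
  then show ?thesis
    by (subst (asm) integrable_completion) auto
qed

lemma tail_int0:
  shows "integrable lborel (\<lambda>s. indicator {1..} s * s powr (-2::real))"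
proof -
  have "(\<lambda>s. s powr (-2::real)) integrable_on {1..}" using has_integral_powr_to_inf[of "-2" 1] by auto
  then have "(\<lambda>s. s powr (-2::real)) absolutely_integrable_on {1..}"
    by (rule nonnegative_absolutely_integrable_1) auto
  then have "integrable lebesgue (\<lambda>s. indicator {1..} s *\<^sub>R (s powr (-2::real)))"
    unfolding set_integrable_def .
  then show ?thesis
    by (subst (asm) integrable_completion) auto
qed

lemma transl:
  fixes g :: "real \<Rightarrow> real"
  assumes "integrable lborel g"
  shows "integrable lborel (\<lambda>y. g (y - x))" "(LINT y|lborel. g (y - x)) = (LINT s|lborel. g s)"
proof -
  show "integrable lborel (\<lambda>y. g (y - x))"
    using lborel_integrable_real_affine[OF assms, of 1 "-x"] by simp
  show "(LINT y|lborel. g (y - x)) = (LINT s|lborel. g s)"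
    using lborel_integral_real_affine[of 1 g "-x"] by simp
qed

definition kern :: "real \<Rightarrow> real \<Rightarrow> real" where
  "kern \<mu> s = \<bar>s\<bar> powr (-\<mu>) * indicator {-2..2} s"

lemma kern_int:
  assumes "0 < \<mu>" "\<mu> < 1"
  shows "integrable lborel (kern \<mu>)"
proof -
  have q: "integrable lborel (\<lambda>s. indicator {0..2} s * s powr (-\<mu>))"
    using powr0_int[of "-\<mu>" 2] assms by simp
  have q': "integrable lborel (\<lambda>s. indicator {0..2} (-s) * (-s) powr (-\<mu>))"
    using lborel_integrable_real_affine[OF q, of "-1" 0] by simp
  have eq: "kern \<mu> = (\<lambda>s. indicator {0..2} s * s powr (-\<mu>) + indicator {0..2} (-s) * (-s) powr (-\<mu>))"
    by (auto simp: kern_def indicator_def abs_if fun_eq_iff)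
  show ?thesis by (subst eq) (rule Bochner_Integration.integrable_add[OF q q'])
qed

definition tailw :: "real \<Rightarrow> real" where
  "tailw s = (if 1 \<le> \<bar>s\<bar> then 1 / s^2 else 0)"

lemma tailw_int: "integrable lborel tailw"
proof -
  have q: "integrable lborel (\<lambda>s. indicator {1..} s * s powr (-2::real))" by (rule tail_int0)
  have q': "integrable lborel (\<lambda>s. indicator {1..} (-s) * (-s) powr (-2::real))"
    using lborel_integrable_real_affine[OF q, of "-1" 0] by simp
  have eq: "tailw = (\<lambda>s. indicator {1..} s * s powr (-2::real) + indicator {1..} (-s) * (-s) powr (-2::real))"
    by (auto simp: tailw_def indicator_def abs_if fun_eq_iff powr_minus powr_realpow divide_inverse)
  show ?thesis by (subst eq) (rule Bochner_Integration.integrable_add[OF q q'])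
qed

lemma kern_nonneg: "0 \<le> kern \<mu> s" by (simp add: kern_def)
lemma tailw_nonneg: "0 \<le> tailw s" by (simp add: tailw_def)

definition chq :: "real \<Rightarrow> (real \<Rightarrow> real) \<Rightarrow> real" where
  "chq \<mu> G = (LINT x|lborel. (LINT y|lborel. \<bar>x - y\<bar> powr (-\<mu>) * G y) * G x)"

definition KP :: "real \<Rightarrow> real" where
  "KP \<mu> = (LINT s|lborel. kern \<mu> s) + 2"

lemma KP_nonneg: "0 \<le> KP \<mu>"
  unfolding KP_def using integral_nonneg_AE[of "kern \<mu>" lborel] kern_nonneg by auto

lemma ind_int: "integrable lborel (indicator {a..b::real} :: real \<Rightarrow> real)"
  by (rule integrable_real_indicator) (auto simp: emeasure_lborel_Icc_eq)

lemma ind_int2: "integrable lborel (indicator {a<..<b::real} :: real \<Rightarrow> real)"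
proof (rule integrable_real_indicator)
  show "emeasure lborel {a<..<b} < \<infinity>"
  proof -
    have "emeasure lborel {a<..<b} \<le> emeasure lborel {a..b}" by (rule emeasure_mono) auto
    then show ?thesis by (metis dual_order.strict_trans2 emeasure_lborel_Icc_eq ennreal_less_top infinity_ennreal_def)
  qed
qed auto

lemma inner_dom:
  assumes mu: "0 < \<mu>" "\<mu> < 1"
    and G0: "\<And>y. 0 \<le> G y" and GB: "\<And>y. G y \<le> B * indicator {-1..1} y"
  shows "\<bar>x - y\<bar> powr (-\<mu>) * G y \<le> B * (kern \<mu> (y - x) + indicator {-1..1} y)"
proof -
  have B0: "0 \<le> B" using G0[of 0] GB[of 0] by simp
  show ?thesis
  proof (cases "y \<in> {-1..1}")
    case False
    then have "G y = 0" using G0[of y] GB[of y] by simp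
    then show ?thesis using B0 kern_nonneg[of \<mu> "y-x"] by simp
  next
    case True
    then have Gy: "G y \<le> B" using GB[of y] by simp
    have pw: "\<bar>x - y\<bar> powr (-\<mu>) \<le> kern \<mu> (y - x) + 1"
    proof (cases "\<bar>x - y\<bar> \<le> 2")
      case True
      then have "y - x \<in> {-2..2}" by auto
      then show ?thesis by (simp add: kern_def abs_minus_commute)
    next
      case False
      then have "\<bar>x - y\<bar> powr (-\<mu>) \<le> 1"
        using mu by (smt (verit) powr_less_one)
      then show ?thesis using kern_nonneg[of \<mu> "y-x"] by simp
    qed
    have "\<bar>x - y\<bar> powr (-\<mu>) * G y \<le> (kern \<mu> (y - x) + 1) * B"
      using pw Gy G0[of y] by (intro mult_mono) (auto simp: kern_nonneg)
    then show ?thesis using True by (simp add: mult.commute)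
  qed
qed

lemma dom_int:
  assumes mu: "0 < \<mu>" "\<mu> < 1"
  shows "integrable lborel (\<lambda>y. B * (kern \<mu> (y - x) + indicator {-1..1} y))"
    "(LINT y|lborel. B * (kern \<mu> (y - x) + indicator {-1..1} y)) = B * KP \<mu>"
proof -
  have k: "integrable lborel (\<lambda>y. kern \<mu> (y - x))" using transl(1)[OF kern_int[OF mu]] .
  show "integrable lborel (\<lambda>y. B * (kern \<mu> (y - x) + indicator {-1..1} y))"
    using k ind_int by auto
  have "(LINT y|lborel. kern \<mu> (y - x) + indicator {-1..1} y) = (LINT s|lborel. kern \<mu> s) + 2"
    using k ind_int[of "-1" 1] transl(2)[OF kern_int[OF mu], of x] by simp
  then show "(LINT y|lborel. B * (kern \<mu> (y - x) + indicator {-1..1} y)) = B * KP \<mu>"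
    by (simp add: KP_def)
qed

lemma choq_basic:
  fixes G :: "real \<Rightarrow> real"
  assumes mu: "0 < \<mu>" "\<mu> < 1"
    and Gm[measurable]: "G \<in> borel_measurable borel"
    and G0: "\<And>y. 0 \<le> G y" and GB: "\<And>y. G y \<le> B * indicator {-1..1} y"
  shows "integrable lborel (\<lambda>y. \<bar>x - y\<bar> powr (-\<mu>) * G y)"
    and "0 \<le> (LINT y|lborel. \<bar>x - y\<bar> powr (-\<mu>) * G y)"
    and "(LINT y|lborel. \<bar>x - y\<bar> powr (-\<mu>) * G y) \<le> B * KP \<mu>"
proof -
  have d: "\<And>y. \<bar>x - y\<bar> powr (-\<mu>) * G y \<le> B * (kern \<mu> (y - x) + indicator {-1..1} y)"
    using inner_dom[OF mu G0 GB] .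
  have nn: "\<And>y. 0 \<le> \<bar>x - y\<bar> powr (-\<mu>) * G y" using G0 by simp
  show i: "integrable lborel (\<lambda>y. \<bar>x - y\<bar> powr (-\<mu>) * G y)"
    apply (rule Bochner_Integration.integrable_bound[OF dom_int(1)[OF mu, of B x]])
     apply measurable
    using d nn by (auto intro!: AE_I2 order_trans[OF _ abs_ge_self])
  show "0 \<le> (LINT y|lborel. \<bar>x - y\<bar> powr (-\<mu>) * G y)"
    using nn by (simp add: integral_nonneg_AE)
  have "(LINT y|lborel. \<bar>x - y\<bar> powr (-\<mu>) * G y) \<le> (LINT y|lborel. B * (kern \<mu> (y - x) + indicator {-1..1} y))"
    by (rule integral_mono[OF i dom_int(1)[OF mu]]) (use d in auto)
  also have "\<dots> = B * KP \<mu>" by (rule dom_int(2)[OF mu])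
  finally show "(LINT y|lborel. \<bar>x - y\<bar> powr (-\<mu>) * G y) \<le> B * KP \<mu>" .
qed

lemma inner_meas:
  fixes G :: "real \<Rightarrow> real" and \<mu> :: real
  assumes Gm[measurable]: "G \<in> borel_measurable borel"
  shows "(\<lambda>x. LINT y|lborel. \<bar>x - y\<bar> powr (-\<mu>) * G y) \<in> borel_measurable lborel"
  by measurable

lemma pow_ge1: "z \<le> 1 \<Longrightarrow> 0 < (z::real) \<Longrightarrow> 0 < \<mu> \<Longrightarrow> 1 \<le> z powr (-\<mu>)"
  by (smt (verit, del_insts) powr01_less_one powr_one_eq_one)

lemma choq_outer:
  fixes G :: "real \<Rightarrow> real"
  assumes mu: "0 < \<mu>" "\<mu> < 1"
    and Gm[measurable]: "G \<in> borel_measurable borel"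
    and G0: "\<And>y. 0 \<le> G y" and GB: "\<And>y. G y \<le> B * indicator {-1..1} y"
  shows "integrable lborel (\<lambda>x. (LINT y|lborel. \<bar>x - y\<bar> powr (-\<mu>) * G y) * G x)"
    and "0 \<le> chq \<mu> G" and "chq \<mu> G \<le> B * KP \<mu> * B * 2"
proof -
  note cb = choq_basic[OF mu Gm G0 GB]
  have B0: "0 \<le> B" using G0[of 0] GB[of 0] by simp
  have pb: "\<And>x. (LINT y|lborel. \<bar>x - y\<bar> powr (-\<mu>) * G y) * G x \<le> B * KP \<mu> * B * indicator {-1..1} x"
  proof -
    fix x
    have "(LINT y|lborel. \<bar>x - y\<bar> powr (-\<mu>) * G y) * G x \<le> (B * KP \<mu>) * (B * indicator {-1..1::real} x)"
      by (intro mult_mono cb(3) GB) (use cb(2) G0 B0 KP_nonneg in auto)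
    then show "(LINT y|lborel. \<bar>x - y\<bar> powr (-\<mu>) * G y) * G x \<le> B * KP \<mu> * B * indicator {-1..1} x"
      by (simp add: mult.assoc)
  qed
  have pn: "\<And>x. 0 \<le> (LINT y|lborel. \<bar>x - y\<bar> powr (-\<mu>) * G y) * G x"
    using cb(2) G0 by simp
  have di: "integrable lborel (\<lambda>x. B * KP \<mu> * B * indicator {-1..1::real} x)"
    using ind_int[of "-1" 1] by simp
  show i: "integrable lborel (\<lambda>x. (LINT y|lborel. \<bar>x - y\<bar> powr (-\<mu>) * G y) * G x)"
    apply (rule Bochner_Integration.integrable_bound[OF di])
     apply measurable
    using pb pn by (auto intro!: AE_I2 order_trans[OF _ abs_ge_self])
  show "0 \<le> chq \<mu> G" unfolding chq_def using pn by (simp add: integral_nonneg_AE)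
  have "chq \<mu> G \<le> (LINT x|lborel. B * KP \<mu> * B * indicator {-1..1::real} x)"
    unfolding chq_def by (rule integral_mono[OF i di]) (use pb in auto)
  also have "\<dots> = B * KP \<mu> * B * 2" by simp
  finally show "chq \<mu> G \<le> B * KP \<mu> * B * 2" .
qed

lemma choq_cont:
  fixes G :: "real \<Rightarrow> real" and Gs :: "nat \<Rightarrow> real \<Rightarrow> real"
  assumes mu: "0 < \<mu>" "\<mu> < 1"
    and Gm[measurable]: "G \<in> borel_measurable borel"
    and G0: "\<And>y. 0 \<le> G y" and GB: "\<And>y. G y \<le> B * indicator {-1..1} y"
    and Gsm[measurable]: "\<And>i. Gs i \<in> borel_measurable borel"
    and Gs0: "\<And>i y. 0 \<le> Gs i y" and GsB: "\<And>i y. Gs i y \<le> B * indicator {-1..1} y"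
    and lim: "\<And>y. (\<lambda>i. Gs i y) \<longlonglongrightarrow> G y"
  shows "(\<lambda>i. chq \<mu> (Gs i)) \<longlonglongrightarrow> chq \<mu> G"
  unfolding chq_def
proof (rule integral_dominated_convergence[where w="\<lambda>x. B * KP \<mu> * B * indicator {-1..1} x"])
  show "(\<lambda>x. (LINT y|lborel. \<bar>x - y\<bar> powr (-\<mu>) * G y) * G x) \<in> borel_measurable lborel"
    by measurable
  show "\<And>i. (\<lambda>x. (LINT y|lborel. \<bar>x - y\<bar> powr (-\<mu>) * Gs i y) * Gs i x) \<in> borel_measurable lborel"
    by measurable
  show "integrable lborel (\<lambda>x. B * KP \<mu> * B * indicator {-1..1::real} x)"
    using ind_int[of "-1" 1] by simp
  show "AE x in lborel. (\<lambda>i. (LINT y|lborel. \<bar>x - y\<bar> powr (-\<mu>) * Gs i y) * Gs i x) \<longlonglongrightarrow>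
          (LINT y|lborel. \<bar>x - y\<bar> powr (-\<mu>) * G y) * G x"
  proof (rule AE_I2)
    fix x
    have "(\<lambda>i. (LINT y|lborel. \<bar>x - y\<bar> powr (-\<mu>) * Gs i y)) \<longlonglongrightarrow> (LINT y|lborel. \<bar>x - y\<bar> powr (-\<mu>) * G y)"
    proof (rule integral_dominated_convergence[where w="\<lambda>y. B * (kern \<mu> (y - x) + indicator {-1..1} y)"])
      show "(\<lambda>y. \<bar>x - y\<bar> powr (-\<mu>) * G y) \<in> borel_measurable lborel" by measurable
      show "\<And>i. (\<lambda>y. \<bar>x - y\<bar> powr (-\<mu>) * Gs i y) \<in> borel_measurable lborel" by measurable
      show "integrable lborel (\<lambda>y. B * (kern \<mu> (y - x) + indicator {-1..1} y))"
        by (rule dom_int(1)[OF mu])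
      show "AE y in lborel. (\<lambda>i. \<bar>x - y\<bar> powr (-\<mu>) * Gs i y) \<longlonglongrightarrow> \<bar>x - y\<bar> powr (-\<mu>) * G y"
        by (intro AE_I2 tendsto_mult tendsto_const lim)
      show "\<And>i. AE y in lborel. norm (\<bar>x - y\<bar> powr (-\<mu>) * Gs i y) \<le> B * (kern \<mu> (y - x) + indicator {-1..1} y)"
        using inner_dom[OF mu Gs0 GsB] Gs0 by (auto intro!: AE_I2)
    qed
    then show "(\<lambda>i. (LINT y|lborel. \<bar>x - y\<bar> powr (-\<mu>) * Gs i y) * Gs i x) \<longlonglongrightarrow>
          (LINT y|lborel. \<bar>x - y\<bar> powr (-\<mu>) * G y) * G x"
      by (intro tendsto_mult lim)
  qed
  show "\<And>i. AE x in lborel. norm ((LINT y|lborel. \<bar>x - y\<bar> powr (-\<mu>) * Gs i y) * Gs i x) \<le> B * KP \<mu> * B * indicator {-1..1} x"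
  proof (rule AE_I2)
    fix i x
    note cb = choq_basic[OF mu Gsm Gs0 GsB]
    have B0: "0 \<le> B" using G0[of 0] GB[of 0] by simp
    have "(LINT y|lborel. \<bar>x - y\<bar> powr (-\<mu>) * Gs i y) * Gs i x \<le> (B * KP \<mu>) * (B * indicator {-1..1::real} x)"
      by (intro mult_mono cb(3) GsB) (use cb(2) Gs0 B0 KP_nonneg in auto)
    moreover have "0 \<le> (LINT y|lborel. \<bar>x - y\<bar> powr (-\<mu>) * Gs i y) * Gs i x"
      using cb(2) Gs0 by simp
    ultimately show "norm ((LINT y|lborel. \<bar>x - y\<bar> powr (-\<mu>) * Gs i y) * Gs i x) \<le> B * KP \<mu> * B * indicator {-1..1} x"
      by (simp add: mult.assoc)
  qed
qed

lemma choq_lower: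
  fixes G :: "real \<Rightarrow> real"
  assumes mu: "0 < \<mu>" "\<mu> < 1"
    and Gm[measurable]: "G \<in> borel_measurable borel"
    and G0: "\<And>y. 0 \<le> G y" and GB: "\<And>y. G y \<le> B * indicator {-1..1} y"
    and c: "0 \<le> c" and r: "0 < r" "r \<le> 1/2"
    and Gc: "\<And>y. c * indicator {-r<..<r} y \<le> G y"
  shows "c * (2 * r) * (c * (2 * r)) \<le> chq \<mu> G"
proof -
  note cb = choq_basic[OF mu Gm G0 GB]
  have inner: "c * (2 * r) \<le> (LINT y|lborel. \<bar>x - y\<bar> powr (-\<mu>) * G y)" if x: "x \<in> {-r<..<r}" for x
  proof -
    have "(LINT y|lborel. c * indicator {-r<..<r} y) \<le> (LINT y|lborel. \<bar>x - y\<bar> powr (-\<mu>) * G y)"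
    proof (rule integral_mono_AE)
      show "integrable lborel (\<lambda>y. c * indicator {-r<..<r} y)" using ind_int2 by simp
      show "integrable lborel (\<lambda>y. \<bar>x - y\<bar> powr (-\<mu>) * G y)" by (rule cb(1))
      show "AE y in lborel. c * indicator {-r<..<r} y \<le> \<bar>x - y\<bar> powr (-\<mu>) * G y"
        using AE_lborel_singleton[of x]
      proof eventually_elim
        case (elim y)
        show ?case
        proof (cases "y \<in> {-r<..<r}")
          case True
          then have "\<bar>x - y\<bar> \<le> 1" "0 < \<bar>x - y\<bar>" using x r elim by auto
          then have p1: "1 \<le> \<bar>x - y\<bar> powr (-\<mu>)" using mu pow_ge1[of "\<bar>x - y\<bar>" \<mu>] by simp
          have "c \<le> G y" using Gc[of y] True by simp
          then have "1 * c \<le> \<bar>x - y\<bar> powr (-\<mu>) * G y" using p1 c by (intro mult_mono) auto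
          then show ?thesis using True by simp
        next
          case False
          then show ?thesis using G0[of y] by simp
        qed
      qed
    qed
    then show ?thesis using r by simp
  qed
  have "(LINT x|lborel. c * (2 * r) * (c * indicator {-r<..<r} x)) \<le> chq \<mu> G"
    unfolding chq_def
  proof (rule integral_mono)
    show "integrable lborel (\<lambda>x. c * (2 * r) * (c * indicator {-r<..<r} x))" using ind_int2 by simp
    show "integrable lborel (\<lambda>x. (LINT y|lborel. \<bar>x - y\<bar> powr (-\<mu>) * G y) * G x)"
      by (rule choq_outer(1)[OF mu Gm G0 GB])
    fix x
    show "c * (2 * r) * (c * indicator {-r<..<r} x) \<le> (LINT y|lborel. \<bar>x - y\<bar> powr (-\<mu>) * G y) * G x"
    proof (cases "x \<in> {-r<..<r}")
      case True
      then show ?thesis using inner[OF True] Gc[of x] c r cb(2)[of x] by (intro mult_mono) auto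
    next
      case False
      then show ?thesis using cb(2) G0[of x] by simp
    qed
  qed
  then show ?thesis using r by simp
qed

lemma semi_pos:
  fixes u :: "real \<Rightarrow> real"
  assumes um[measurable]: "u \<in> borel_measurable borel"
    and Lip: "\<And>x y. \<bar>u x - u y\<bar> \<le> L * \<bar>x - y\<bar>"
    and u0: "\<And>x. 0 \<le> u x" and uM: "\<And>x. u x \<le> M"
    and us: "\<And>x. 1 < \<bar>x\<bar> \<Longrightarrow> u x = 0"
    and ul: "\<And>x. \<bar>x\<bar> < r \<Longrightarrow> m \<le> u x"
    and m: "0 < m" and r: "0 < r" "r \<le> 1/2"
  shows "0 < frac_seminorm_sq u"
proof -
  define k where "k x y = (u x - u y)^2 / (x - y)^2" for x y
  define r1 where "r1 s = L^2 * indicator {-1..1::real} s + M^2 * tailw s" for s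
  define R where "R = (LINT s|lborel. r1 s)"
  have L0: "0 \<le> L" using Lip[of 0 1] by simp
  have k0: "\<And>x y. 0 \<le> k x y" by (simp add: k_def)
  have r1i: "integrable lborel r1" unfolding r1_def using ind_int[of "-1" 1] tailw_int by simp
  have kb1: "k x y \<le> r1 (y - x)" for x y
  proof (cases "\<bar>y - x\<bar> \<le> 1")
    case True
    have "k x y \<le> L^2"
    proof (cases "x = y")
      case False
      have "\<bar>u x - u y\<bar>^2 \<le> (L * \<bar>x - y\<bar>)^2" using Lip[of x y] by (intro power_mono) auto
      then have "(u x - u y)^2 \<le> L^2 * (x - y)^2" by (simp add: power_mult_distrib)
      then show ?thesis using False by (simp add: k_def divide_le_eq)
    qed (simp add: k_def)
    moreover have "indicator {-1..1::real} (y - x) = (1::real)" using True by (auto simp: abs_le_iff)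
    moreover have "0 \<le> M^2 * tailw (y - x)" by (intro mult_nonneg_nonneg zero_le_power2 tailw_nonneg)
    ultimately show ?thesis by (simp add: r1_def)
  next
    case False
    have "\<bar>u x - u y\<bar> \<le> M" using u0[of x] u0[of y] uM[of x] uM[of y] by simp
    then have "(u x - u y)^2 \<le> M^2" by (metis abs_le_square_iff abs_of_nonneg u0 uM order_trans)
    then have "k x y \<le> M^2 / (y - x)^2" unfolding k_def using False
      by (simp add: divide_right_mono power2_commute)
    moreover have "indicator {-1..1::real} (y - x) = (0::real)" using False by (auto simp: abs_le_iff)
    ultimately show ?thesis using False by (simp add: r1_def tailw_def)
  qed
  have ki: "integrable lborel (\<lambda>y. k x y)" for x
    apply (rule Bochner_Integration.integrable_bound[OF transl(1)[OF r1i, of x]])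
     apply (unfold k_def, measurable)
    using kb1 k0 by (auto intro!: AE_I2 order_trans[OF _ abs_ge_self] simp: k_def)
  have kin: "0 \<le> (LINT y|lborel. k x y)" for x using k0 by (simp add: integral_nonneg_AE)
  have kiR: "(LINT y|lborel. k x y) \<le> R" for x
  proof -
    have "(LINT y|lborel. k x y) \<le> (LINT y|lborel. r1 (y - x))"
      by (rule integral_mono[OF ki transl(1)[OF r1i]]) (use kb1 in auto)
    then show ?thesis using transl(2)[OF r1i, of x] by (simp add: R_def)
  qed
  have kfar: "(LINT y|lborel. k x y) \<le> 8 * M^2 * tailw x" if x: "2 \<le> \<bar>x\<bar>" for x
  proof -
    have M0: "0 \<le> M" using u0[of 0] uM[of 0] by simp
    have pt: "k x y \<le> 4 * M^2 * tailw x * indicator {-1..1} y" for y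
    proof (cases "y \<in> {-1..1}")
      case True
      have ux: "u x = 0" using us x by simp
      have "\<bar>x\<bar> / 2 \<le> \<bar>x - y\<bar>" using True x by (auto simp: abs_if split: if_splits)
      then have "(\<bar>x\<bar> / 2)^2 \<le> (x - y)^2" by (metis abs_ge_zero power2_abs power_mono zero_le_divide_iff zero_le_numeral)
      then have xy: "x^2 / 4 \<le> (x - y)^2" by (simp add: power_divide)
      have "(u y)^2 \<le> M^2" using u0[of y] uM[of y] by (intro power_mono) auto
      have x2: "0 < x^2" using x by auto
      have "k x y = (u y)^2 / (x - y)^2" by (simp add: k_def ux)
      also have "\<dots> \<le> M^2 / (x^2 / 4)"
        using \<open>(u y)^2 \<le> M^2\<close> xy x2 by (intro frac_le) auto
      also have "\<dots> = 4 * M^2 * tailw x" using x by (simp add: tailw_def)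
      finally show ?thesis using True by simp
    next
      case False
      then have "u y = 0" using us by auto
      moreover have "u x = 0" using us x by simp
      ultimately show ?thesis using False by (simp add: k_def)
    qed
    have "(LINT y|lborel. k x y) \<le> (LINT y|lborel. 4 * M^2 * tailw x * indicator {-1..1::real} y)"
      by (rule integral_mono[OF ki]) (use pt ind_int[of "-1" 1] in auto)
    then show ?thesis by simp
  qed
  define D where "D x = R * indicator {-2..2::real} x + 8 * M^2 * tailw x" for x
  have Di: "integrable lborel D" unfolding D_def using ind_int[of "-2" 2] tailw_int by simp
  have R0: "0 \<le> R" using kin[of 0] kiR[of 0] by simp
  have kD: "(LINT y|lborel. k x y) \<le> D x" for x
  proof (cases "2 \<le> \<bar>x\<bar>")
    case True
    have "0 \<le> R * indicator {-2..2::real} x" using R0 by simp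
    then show ?thesis using kfar[OF True] unfolding D_def by linarith
  next
    case False
    then have "x \<in> {-2..2}" by auto
    then have "indicator {-2..2::real} x = (1::real)" by simp
    moreover have "0 \<le> 8 * M^2 * tailw x" by (intro mult_nonneg_nonneg zero_le_power2 tailw_nonneg) simp
    ultimately show ?thesis using kiR[of x] unfolding D_def by (simp add: mult.commute)
  qed
  have oi: "integrable lborel (\<lambda>x. LINT y|lborel. k x y)"
    apply (rule Bochner_Integration.integrable_bound[OF Di])
     apply (unfold k_def, measurable)
    using kD kin by (auto intro!: AE_I2 order_trans[OF _ abs_ge_self] simp: k_def)
  have near: "m^2 / 16 * (2 * r) \<le> (LINT y|lborel. k x y)" if x: "x \<in> {2..3}" for x
  proof -
    have "(LINT y|lborel. m^2 / 16 * indicator {-r<..<r} y) \<le> (LINT y|lborel. k x y)"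
    proof (rule integral_mono[OF _ ki])
      show "integrable lborel (\<lambda>y. m^2 / 16 * indicator {-r<..<r} y)" using ind_int2 by simp
      fix y
      show "m^2 / 16 * indicator {-r<..<r} y \<le> k x y"
      proof (cases "y \<in> {-r<..<r}")
        case True
        have ux: "u x = 0" using us x by simp
        have uy: "m \<le> u y" using ul True by auto
        have "m^2 \<le> (u y)^2" using uy m by (intro power_mono) auto
        have d0: "0 < (x - y)^2" using x True r by auto
        have "(x - y)^2 \<le> 4^2" using x True r by (intro power_mono) auto
        then have "m^2 / 16 \<le> (u y)^2 / (x - y)^2"
          using \<open>m^2 \<le> (u y)^2\<close> d0 m by (intro frac_le) auto
        then show ?thesis using True by (simp add: k_def ux)
      qed (simp add: k0)
    qed
    then show ?thesis using r by simp
  qed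
  have "(LINT x|lborel. m^2 / 16 * (2 * r) * indicator {2..3::real} x) \<le> (LINT x|lborel. LINT y|lborel. k x y)"
  proof (rule integral_mono[OF _ oi])
    show "integrable lborel (\<lambda>x. m^2 / 16 * (2 * r) * indicator {2..3::real} x)" using ind_int[of 2 3] by simp
    fix x
    show "m^2 / 16 * (2 * r) * indicator {2..3::real} x \<le> (LINT y|lborel. k x y)"
      using near[of x] kin[of x] by (cases "x \<in> {2..3}") auto
  qed
  moreover have "(LINT x|lborel. m^2 / 16 * (2 * r) * indicator {2..3::real} x) = m^2 / 16 * (2 * r)"
    by simp
  moreover have "0 < m^2 / 16 * (2 * r)" using m r by simp
  ultimately have "0 < (LINT x|lborel. LINT y|lborel. k x y)" by linarith
  then show ?thesis unfolding frac_seminorm_sq_def k_def[symmetric] by simp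
qed

lemma prim_deriv:
  assumes fc: "continuous_on UNIV f"
  shows "(prim f has_real_derivative f t) (at t)"
proof -
  define R where "R = \<bar>t\<bar> + 1"
  have R: "0 < R" "t \<in> {-R<..<R}" by (auto simp: R_def)
  have int: "f integrable_on {-R..R}"
    by (rule integrable_continuous_interval) (use fc continuous_on_subset in blast)
  have eq: "integral {-R..s} f - integral {-R..0} f = prim f s" if s: "s \<in> {-R<..<R}" for s
  proof (cases "0 \<le> s")
    case True
    have i2: "f integrable_on {-R..s}" by (rule integrable_on_subinterval[OF int]) (use s in auto)
    have "integral {-R..0} f + integral {0..s} f = integral {-R..s} f"
      using Henstock_Kurzweil_Integration.integral_combine[OF _ _ i2, of 0] True R by simp
    then show ?thesis using True by (simp add: prim_def)
  next
    case False
    have "integral {-R..s} f + integral {s..0} f = integral {-R..0} f"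
      by (rule Henstock_Kurzweil_Integration.integral_combine) (use False R s in \<open>auto intro: integrable_on_subinterval[OF int]\<close>)
    then show ?thesis using False by (simp add: prim_def)
  qed
  have "((\<lambda>u. integral {-R..u} f) has_real_derivative f t) (at t within {-R..R})"
    by (rule integral_has_real_derivative) (use fc continuous_on_subset R in auto)
  then have "((\<lambda>u. integral {-R..u} f) has_real_derivative f t) (at t)"
    using at_within_interior[of t "{-R..R}"] R by simp
  then have "((\<lambda>u. integral {-R..u} f - integral {-R..0} f) has_real_derivative f t - 0) (at t)"
    by (intro DERIV_diff DERIV_const)
  then have "((\<lambda>u. integral {-R..u} f - integral {-R..0} f) has_real_derivative f t) (at t)"
    by simp
  then show ?thesis
    by (rule has_field_derivative_transform_within_open[where S="{-R<..<R}"]) (use R eq in auto)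
qed

lemma prim_cont: "continuous_on UNIV f \<Longrightarrow> continuous_on UNIV (prim f)"
  using prim_deriv by (meson DERIV_isCont continuous_at_imp_continuous_on)

lemma prim_0[simp]: "prim f 0 = 0" by (simp add: prim_def)

locale fprops =
  fixes f :: "real \<Rightarrow> real" and \<theta> :: real
  assumes fc: "continuous_on UNIV f"
    and th: "\<theta> > 0"
    and f3: "\<And>t. t \<noteq> 0 \<Longrightarrow> 0 < \<theta> * prim f t \<and> \<theta> * prim f t \<le> t * f t"
begin

lemma F_pos: "t \<noteq> 0 \<Longrightarrow> 0 < prim f t"
  using f3[of t] th by (simp add: zero_less_mult_iff)

lemma F_nonneg: "0 \<le> prim f t"
  using F_pos[of t] by (cases "t = 0") auto

lemma f_pos: "0 < t \<Longrightarrow> 0 < f t"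
  using f3[of t] th by (smt (verit) zero_less_mult_iff)

lemma F_mono: assumes "0 \<le> s" "s \<le> s'" shows "prim f s \<le> prim f s'"
proof (cases "s = s'")
  case False
  then have "s < s'" using assms by simp
  from MVT2[OF this, of "prim f" f] prim_deriv[OF fc]
  obtain z where z: "s < z" "z < s'" "prim f s' - prim f s = (s' - s) * f z" by blast
  have "0 < f z" using f_pos z assms by simp
  then show ?thesis using z \<open>s < s'\<close> by (smt (verit) mult_pos_pos)
qed simp

lemma F_lower: assumes "1 \<le> s" shows "prim f 1 * s powr \<theta> \<le> prim f s"
proof -
  define g where "g x = ln (prim f x) - \<theta> * ln x" for x
  have "g 1 \<le> g s"
  proof (rule DERIV_nonneg_imp_increasing_open[OF assms])
    fix x assume x: "1 < x" "x < s"
    have Fx: "0 < prim f x" using F_pos x by simp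
    have "(g has_real_derivative (f x / prim f x - \<theta> * (1 / x))) (at x)"
      unfolding g_def using Fx x
      by (auto intro!: derivative_eq_intros prim_deriv[OF fc])
    moreover have "0 \<le> f x / prim f x - \<theta> * (1 / x)"
    proof -
      have "\<theta> * prim f x \<le> x * f x" using f3[of x] x by simp
      then have "\<theta> / x \<le> f x / prim f x" using Fx x by (simp add: field_simps)
      then show ?thesis by simp
    qed
    ultimately show "\<exists>y. (g has_real_derivative y) (at x) \<and> 0 \<le> y" by blast
  next
    have "\<forall>x\<in>{1..s}. isCont g x"
    proof
      fix x assume x: "x \<in> {1..s}"
      have Fx: "0 < prim f x" using F_pos x by simp
      have "isCont (prim f) x" using prim_deriv[OF fc] DERIV_isCont by blast
      then show "isCont g x" unfolding g_def using Fx x by (auto intro!: continuous_intros)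
    qed
    then show "continuous_on {1..s} g" by (simp add: continuous_at_imp_continuous_on)
  qed
  then have "ln (prim f 1) \<le> ln (prim f s) - \<theta> * ln s" by (simp add: g_def)
  then have "exp (ln (prim f 1) + \<theta> * ln s) \<le> exp (ln (prim f s))" by simp
  then have "prim f 1 * exp (\<theta> * ln s) \<le> prim f s"
    using F_pos[of 1] F_pos[of s] assms by (simp add: exp_add)
  then show ?thesis using assms by (simp add: powr_def mult.commute)
qed

lemma F_upper:
  assumes k: "\<kappa> > 0" and lim: "((\<lambda>t. \<bar>f t\<bar> / \<bar>t\<bar> powr \<kappa>) \<longlongrightarrow> 0) (at 0)"
  shows "\<exists>\<delta>>0. \<forall>s. 0 \<le> s \<and> s < \<delta> \<longrightarrow> prim f s \<le> s powr (\<kappa> + 1)"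
proof -
  have "\<forall>\<^sub>F t in at 0. \<bar>f t\<bar> / \<bar>t\<bar> powr \<kappa> < 1"
    using lim by (rule order_tendstoD) simp
  then obtain \<delta> where d: "\<delta> > 0" "\<And>t. t \<noteq> 0 \<Longrightarrow> dist t 0 < \<delta> \<Longrightarrow> \<bar>f t\<bar> / \<bar>t\<bar> powr \<kappa> < 1"
    unfolding eventually_at by blast
  show ?thesis
  proof (intro exI[of _ \<delta>] conjI allI impI)
    fix s assume s: "0 \<le> s \<and> s < \<delta>"
    show "prim f s \<le> s powr (\<kappa> + 1)"
    proof (cases "s = 0")
      case False
      then have "0 < s" using s by simp
      from MVT2[OF this, of "prim f" f] prim_deriv[OF fc]
      obtain z where z: "0 < z" "z < s" "prim f s - prim f 0 = (s - 0) * f z" by blast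
      have "\<bar>f z\<bar> / \<bar>z\<bar> powr \<kappa> < 1" using d(2)[of z] z s by simp
      then have "\<bar>f z\<bar> \<le> z powr \<kappa>" using z by (simp add: divide_less_eq)
      also have "\<dots> \<le> s powr \<kappa>" using z k by (intro powr_mono2) auto
      finally have "f z \<le> s powr \<kappa>" by simp
      then have "prim f s \<le> s * s powr \<kappa>" using z by (simp add: mult_left_mono)
      also have "\<dots> = s powr (\<kappa> + 1)" using \<open>0 < s\<close> by (simp add: powr_add)
      finally show ?thesis .
    qed simp
  qed (use d in auto)
qed

end

lemma sq_div: "0 < (L::real) \<Longrightarrow> 0 < p \<Longrightarrow> L / (p * sqrt L) = sqrt L / p"
  by (metis divide_divide_eq_left' less_eq_real_def real_div_sqrt)

lemma ln_lip: fixes a b e :: real assumes "0 < e" "e \<le> a" "e \<le> b" shows "\<bar>ln a - ln b\<bar> \<le> \<bar>a - b\<bar> / e"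
proof -
  have k: "ln x - ln y \<le> (x - y) / e" if "e \<le> y" "y \<le> x" for x y
  proof -
    have y0: "0 < y" using that assms by linarith
    have "ln x - ln y = ln (x / y)" using y0 that by (simp add: ln_div)
    also have "\<dots> \<le> x / y - 1" using y0 that by (intro ln_le_minus_one) simp
    also have "\<dots> = (x - y) / y" using y0 by (simp add: field_simps)
    also have "\<dots> \<le> (x - y) / e" using that assms by (intro divide_left_mono) auto
    finally show ?thesis .
  qed
  show ?thesis
  proof (cases "b \<le> a")
    case True
    have "0 \<le> ln a - ln b" using True assms by simp
    then show ?thesis using k[of b a] True assms by simp
  next
    case False
    have "0 \<le> ln b - ln a" using False assms by simp
    then show ?thesis using k[of a b] False assms by simp
  qed
qed

definition clamp :: "nat \<Rightarrow> real \<Rightarrow> real" where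
  "clamp n x = min 1 (max (1 / real n) \<bar>x\<bar>)"

lemma clamp_lip: "\<bar>clamp n x - clamp n y\<bar> \<le> \<bar>x - y\<bar>"
  unfolding clamp_def by (auto simp: min_def max_def abs_if)

lemma varpi_alt:
  assumes n: "n \<ge> 2"
  shows "varpi n x = ln (1 / clamp n x) / (sqrt pi * sqrt (ln (real n)))"
proof -
  have ln0: "0 < ln (real n)" using n by simp
  show ?thesis
  proof (cases "\<bar>x\<bar> < 1 / real n")
    case True
    then have "clamp n x = 1 / real n" using n by (simp add: clamp_def min_def max_def)
    moreover have "ln (real n) / (sqrt pi * sqrt (ln (real n))) = sqrt (ln (real n)) / sqrt pi"
      using ln0 by (intro sq_div) auto
    ultimately show ?thesis using True n by (simp add: varpi_def ln_div)
  next
    case False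
    show ?thesis
    proof (cases "\<bar>x\<bar> \<le> 1")
      case True
      then have "clamp n x = \<bar>x\<bar>" using False by (simp add: clamp_def min_def max_def)
      then show ?thesis using True False by (simp add: varpi_def)
    next
      case F2: False
      have n1: "1 / real n < 1" using n by simp
      then have "clamp n x = 1" using F2 by (simp add: clamp_def min_def max_def)
      then show ?thesis using F2 False by (simp add: varpi_def)
    qed
  qed
qed

lemma clamp_ge: "n \<ge> 2 \<Longrightarrow> 1 / real n \<le> clamp n x"
  by (simp add: clamp_def)

lemma varpi_lip:
  assumes n: "n \<ge> 2"
  shows "\<bar>varpi n x - varpi n y\<bar> \<le> real n / (sqrt pi * sqrt (ln (real n))) * \<bar>x - y\<bar>"
proof -
  define K where "K = sqrt pi * sqrt (ln (real n))"
  have K: "0 < K" using n by (simp add: K_def)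
  have cx: "0 < clamp n x" "0 < clamp n y" using clamp_ge[OF n, of x] clamp_ge[OF n, of y] n
    by (auto intro: less_le_trans[rotated])
  have "\<bar>varpi n x - varpi n y\<bar> = \<bar>ln (clamp n y) - ln (clamp n x)\<bar> / K"
    using cx K unfolding varpi_alt[OF n] K_def[symmetric]
    by (simp add: ln_div diff_divide_distrib[symmetric] abs_minus_commute)
  also have "\<dots> \<le> (\<bar>clamp n y - clamp n x\<bar> / (1 / real n)) / K"
    using n K by (intro divide_right_mono ln_lip clamp_ge) auto
  also have "\<dots> \<le> (\<bar>x - y\<bar> * real n) / K"
    using n K clamp_lip[of n y x] by (intro divide_right_mono) (auto simp: abs_minus_commute mult_right_mono)
  finally show ?thesis by (simp add: K_def mult.commute)
qed

lemma varpi_bounds: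
  assumes n: "n \<ge> 2"
  shows "0 \<le> varpi n x" "varpi n x \<le> sqrt (ln (real n)) / sqrt pi"
    "1 < \<bar>x\<bar> \<Longrightarrow> varpi n x = 0"
    "\<bar>x\<bar> < 1 / real n \<Longrightarrow> varpi n x = sqrt (ln (real n)) / sqrt pi"
proof -
  have ln0: "0 < ln (real n)" using n by simp
  have n1: "1 / real n < 1" using n by simp
  show "1 < \<bar>x\<bar> \<Longrightarrow> varpi n x = 0"
  proof -
    assume x: "1 < \<bar>x\<bar>"
    then have "\<not> \<bar>x\<bar> < 1 / real n" "\<not> \<bar>x\<bar> \<le> 1" using n1 by auto
    then show ?thesis by (simp add: varpi_def)
  qed
  show "\<bar>x\<bar> < 1 / real n \<Longrightarrow> varpi n x = sqrt (ln (real n)) / sqrt pi" by (simp add: varpi_def)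
  have c: "1 / real n \<le> clamp n x" "clamp n x \<le> 1" using clamp_ge[OF n] by (auto simp: clamp_def)
  have n0: "0 < 1 / real n" using n by simp
  have c0: "0 < clamp n x" using c(1) n0 by linarith
  have "0 \<le> ln (1 / clamp n x)" using c c0 by simp
  then show "0 \<le> varpi n x" unfolding varpi_alt[OF n] using ln0 by (intro divide_nonneg_nonneg) auto
  have "1 / clamp n x \<le> real n" using c(1) c0 n by (simp add: field_simps)
  then have "ln (1 / clamp n x) \<le> ln (real n)" using c0 n by (subst ln_le_cancel_iff) auto
  then have "varpi n x \<le> ln (real n) / (sqrt pi * sqrt (ln (real n)))"
    unfolding varpi_alt[OF n] using ln0 by (intro divide_right_mono) auto
  also have "\<dots> = sqrt (ln (real n)) / sqrt pi"
    using ln0 by (intro sq_div) auto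
  finally show "varpi n x \<le> sqrt (ln (real n)) / sqrt pi" .
qed

lemma varpi_meas[measurable]: "varpi n \<in> borel_measurable borel"
  unfolding varpi_def[abs_def] by measurable

lemma L2_pos:
  assumes n: "n \<ge> 2"
  shows "0 < L2norm (varpi n)"
proof -
  define V where "V = sqrt (ln (real n)) / sqrt pi"
  have V: "0 < V" using n by (simp add: V_def)
  note vb = varpi_bounds[OF n, folded V_def]
  have b: "(varpi n x)^2 \<le> V^2 * indicator {-1..1::real} x" for x
  proof (cases "x \<in> {-1..1}")
    case True
    then show ?thesis using vb(1,2)[of x] by (simp add: power_mono)
  next
    case False
    then show ?thesis using vb(3)[of x] by auto
  qed
  have i: "integrable lborel (\<lambda>x. (varpi n x)^2)"
    apply (rule Bochner_Integration.integrable_bound[where f="\<lambda>x. V^2 * indicator {-1..1::real} x"])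
    using ind_int[of "-1" 1] apply simp
     apply measurable
    using b by (auto intro!: AE_I2)
  have "(LINT x|lborel. V^2 * indicator {-(1/real n)<..<1/real n} x) \<le> (LINT x|lborel. (varpi n x)^2)"
  proof (rule integral_mono[OF _ i])
    show "integrable lborel (\<lambda>x. V^2 * indicator {-(1/real n)<..<1/real n} x)" using ind_int2 by simp
    fix x show "V^2 * indicator {-(1/real n)<..<1/real n} x \<le> (varpi n x)^2"
      using vb(4)[of x] by (cases "x \<in> {-(1/real n)<..<1/real n}") (auto simp: abs_less_iff)
  qed
  moreover have "(LINT x|lborel. V^2 * indicator {-(1/real n)<..<1/real n} x) = V^2 * (2 / real n)"
    using n by simp
  moreover have "0 < V^2 * (2 / real n)" using V n by simp
  ultimately show ?thesis unfolding L2norm_def by simp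
qed

lemma pw2: "0 < (t::real) \<Longrightarrow> a + b = 2 + c \<Longrightarrow> t powr a * t powr b = t^2 * t powr c"
proof -
  assume t: "0 < t" and abc: "a + b = 2 + c"
  have "t powr a * t powr b = t powr (a + b)" by (rule powr_add[symmetric])
  also have "\<dots> = t powr 2 * t powr c" by (simp add: abc powr_add)
  also have "t powr 2 = t^2" using t powr_realpow[of t 2] by simp
  finally show ?thesis .
qed
lemma pm: "0 < (t::real) \<Longrightarrow> 0 < X \<Longrightarrow> (t*X) powr a * (t*X) powr a = t powr (2*a) * (X powr a * X powr a)"
  by (smt (verit, best) mult_2_right one_add_one powr_add powr_mult)

lemma alg1:
  fixes t X K \<mu> \<kappa> :: real
  assumes t: "0 < t" and X: "0 < X"
  shows "1/2 * t powr (2*(\<mu>-2)) * ((t*X) powr (\<kappa>+1) * K * (t*X) powr (\<kappa>+1) * 2)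
       = t^2 * (t powr (2*\<mu>+2*\<kappa>-4) * ((X powr (\<kappa>+1) * X powr (\<kappa>+1)) * K))"
proof -
  have e1: "(t*X) powr (\<kappa>+1) * (t*X) powr (\<kappa>+1) = t powr (2*(\<kappa>+1)) * (X powr (\<kappa>+1) * X powr (\<kappa>+1))"
    by (rule pm[OF t X])
  have e2: "t powr (2*(\<mu>-2)) * t powr (2*(\<kappa>+1)) = t^2 * t powr (2*\<mu>+2*\<kappa>-4)"
    by (rule pw2[OF t]) (simp add: algebra_simps)
  have "1/2 * t powr (2*(\<mu>-2)) * ((t*X) powr (\<kappa>+1) * K * (t*X) powr (\<kappa>+1) * 2)
      = t powr (2*(\<mu>-2)) * ((t*X) powr (\<kappa>+1) * (t*X) powr (\<kappa>+1)) * K" by (simp add: field_simps)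
  also have "\<dots> = (t powr (2*(\<mu>-2)) * t powr (2*(\<kappa>+1))) * (X powr (\<kappa>+1) * X powr (\<kappa>+1)) * K" by (simp only: e1 mult.assoc)
  also have "\<dots> = t^2 * (t powr (2*\<mu>+2*\<kappa>-4) * ((X powr (\<kappa>+1) * X powr (\<kappa>+1)) * K))" by (simp only: e2 mult.assoc)
  finally show ?thesis .
qed
lemma alg2:
  fixes t X P r \<mu> \<theta> :: real
  assumes t: "0 < t" and X: "0 < X"
  shows "1/2 * t powr (2*(\<mu>-2)) * (P * (t*X) powr \<theta> * (2*r) * (P * (t*X) powr \<theta> * (2*r)))
       = t^2 * (t powr (2*\<mu>+2*\<theta>-6) * ((P * X powr \<theta> * (2*r))^2 / 2))"
proof -
  have e1: "(t*X) powr \<theta> * (t*X) powr \<theta> = t powr (2*\<theta>) * (X powr \<theta> * X powr \<theta>)"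
    by (rule pm[OF t X])
  have e2: "t powr (2*(\<mu>-2)) * t powr (2*\<theta>) = t^2 * t powr (2*\<mu>+2*\<theta>-6)"
    by (rule pw2[OF t]) (simp add: algebra_simps)
  have "1/2 * t powr (2*(\<mu>-2)) * (P * (t*X) powr \<theta> * (2*r) * (P * (t*X) powr \<theta> * (2*r)))
      = t powr (2*(\<mu>-2)) * ((t*X) powr \<theta> * (t*X) powr \<theta>) * (P * P * (2*r) * (2*r) / 2)" by (simp add: field_simps)
  also have "\<dots> = (t powr (2*(\<mu>-2)) * t powr (2*\<theta>)) * (X powr \<theta> * X powr \<theta>) * (P * P * (2*r) * (2*r) / 2)"
    by (simp only: e1 mult.assoc)
  also have "\<dots> = t^2 * t powr (2*\<mu>+2*\<theta>-6) * (X powr \<theta> * X powr \<theta>) * (P * P * (2*r) * (2*r) / 2)"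
    by (simp only: e2)
  also have "\<dots> = t^2 * (t powr (2*\<mu>+2*\<theta>-6) * ((P * X powr \<theta> * (2*r))^2 / 2))"
    by (simp add: power2_eq_square field_simps)
  finally show ?thesis .
qed

lemma big_powr: fixes e K :: real assumes "0 < e" shows "\<exists>T\<ge>1. \<forall>t\<ge>T. K < t powr e"
proof -
  define T where "T = max 1 ((\<bar>K\<bar> + 1) powr (1/e))"
  have "K < t powr e" if t: "T \<le> t" for t
  proof -
    have "(\<bar>K\<bar> + 1) powr (1/e) \<le> t" using t by (simp add: T_def)
    then have "((\<bar>K\<bar> + 1) powr (1/e)) powr e \<le> t powr e" using assms by (intro powr_mono2) auto
    also have "((\<bar>K\<bar> + 1) powr (1/e)) powr e = \<bar>K\<bar> + 1" using assms by (simp add: powr_powr)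
    finally show ?thesis by simp
  qed
  then show ?thesis by (intro exI[of _ T]) (auto simp: T_def)
qed

theorem lemma4p5:
  fixes f :: "real \<Rightarrow> real" and \<mu> a :: real and n :: nat
  assumes mu: "0 < \<mu>" "\<mu> < 1"
    and a: "0 < a"
    and f_cont: "continuous_on UNIV f"
    and f1: "\<exists>\<kappa>>2 - \<mu>. ((\<lambda>t. \<bar>f t\<bar> / \<bar>t\<bar> powr \<kappa>) \<longlongrightarrow> 0) (at 0)"
    and f2a: "\<And>\<alpha>. \<alpha> > pi \<Longrightarrow> ((\<lambda>t. \<bar>f t\<bar> * exp (- \<alpha> * t^2)) \<longlongrightarrow> 0) at_infinity"
    and f2b: "\<And>\<alpha>. 0 < \<alpha> \<Longrightarrow> \<alpha> < pi \<Longrightarrow>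
                filterlim (\<lambda>t. \<bar>f t\<bar> * exp (- \<alpha> * t^2)) at_top at_infinity"
    and f3: "\<exists>\<theta>>3 - \<mu>. \<forall>t. t \<noteq> 0 \<longrightarrow> 0 < \<theta> * prim f t \<and> \<theta> * prim f t \<le> t * f t"
    and n: "n \<ge> 2"
  shows "\<exists>t\<^sub>n>0. Phi f \<mu> a n t\<^sub>n > 0 \<and> (\<forall>t\<ge>0. Phi f \<mu> a n t \<le> Phi f \<mu> a n t\<^sub>n)"
proof -
  obtain \<kappa> where ka: "\<kappa> > 2 - \<mu>" and lim: "((\<lambda>t. \<bar>f t\<bar> / \<bar>t\<bar> powr \<kappa>) \<longlongrightarrow> 0) (at 0)"
    using f1 by blast
  obtain \<theta> where th: "\<theta> > 3 - \<mu>" and f3': "\<forall>t. t \<noteq> 0 \<longrightarrow> 0 < \<theta> * prim f t \<and> \<theta> * prim f t \<le> t * f t"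
    using f3 by blast
  interpret fp: fprops f \<theta>
    by unfold_locales (use f_cont th f3' mu in auto)
  define V where "V = sqrt (ln (real n)) / sqrt pi"
  define c where "c = a / L2norm (varpi n)"
  define u where "u = omega a n"
  have L2: "0 < L2norm (varpi n)" by (rule L2_pos[OF n])
  have c0: "0 < c" using a L2 by (simp add: c_def)
  have V0: "0 < V" using n by (simp add: V_def)
  have cV: "0 < c * V" using c0 V0 by simp
  have u_eq: "u x = c * varpi n x" for x by (simp add: u_def omega_def c_def)
  have u_fun: "u = (\<lambda>x. c * varpi n x)" using u_eq by auto
  note vb = varpi_bounds[OF n, folded V_def]
  have um[measurable]: "u \<in> borel_measurable borel" unfolding u_fun by measurable
  have u0: "0 \<le> u x" for x using vb(1)[of x] c0 by (simp add: u_eq)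
  have uM: "u x \<le> c * V" for x using vb(2)[of x] c0 by (simp add: u_eq mult_left_mono)
  have us: "1 < \<bar>x\<bar> \<Longrightarrow> u x = 0" for x using vb(3)[of x] by (simp add: u_eq)
  have ul: "\<bar>x\<bar> < 1 / real n \<Longrightarrow> u x = c * V" for x using vb(4)[of x] by (simp add: u_eq)
  have uL: "\<bar>u x - u y\<bar> \<le> (c * (real n / (sqrt pi * sqrt (ln (real n))))) * \<bar>x - y\<bar>" for x y
  proof -
    have "\<bar>u x - u y\<bar> = c * \<bar>varpi n x - varpi n y\<bar>"
      using c0 by (simp add: u_eq right_diff_distrib[symmetric] abs_mult)
    also have "\<dots> \<le> c * (real n / (sqrt pi * sqrt (ln (real n))) * \<bar>x - y\<bar>)"
      using c0 varpi_lip[OF n, of x y] by (intro mult_left_mono) auto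
    finally show ?thesis by (simp add: mult.assoc)
  qed
  have n2: "1 / real n \<le> 1/2" "0 < 1 / real n" using n by auto
  define A where "A = frac_seminorm_sq u"
  have A0: "0 < A" unfolding A_def
    by (rule semi_pos[OF um uL u0 uM us, of "1 / real n" "c * V"]) (use ul cV n2 in auto)
  define G where "G t y = prim f (t * u y)" for t y
  define C where "C t = chq \<mu> (G t)" for t
  have PhiC: "Phi f \<mu> a n t = t^2/2*A - 1/2 * t powr (2*(\<mu>-2)) * C t" if "0 < t" for t
    using that by (simp add: Phi_def A_def C_def chq_def choquard_def G_def u_def)
  have pm[measurable]: "prim f \<in> borel_measurable borel"
    by (rule borel_measurable_continuous_onI[OF prim_cont[OF f_cont]])
  have Gm[measurable]: "G t \<in> borel_measurable borel" for t unfolding G_def by measurable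
  have G0: "0 \<le> G t y" for t y by (simp add: G_def fp.F_nonneg)
  have GB: "G t y \<le> prim f (t * (c * V)) * indicator {-1..1} y" if t: "0 \<le> t" for t y
  proof (cases "y \<in> {-1..1}")
    case True
    have "prim f (t * u y) \<le> prim f (t * (c * V))"
      using t u0[of y] uM[of y] by (intro fp.F_mono mult_left_mono) auto
    then show ?thesis using True by (simp add: G_def)
  next
    case False
    then have "u y = 0" using us[of y] by auto
    then show ?thesis using False by (simp add: G_def)
  qed
  have C0: "0 \<le> C t" if "0 \<le> t" for t
    unfolding C_def by (rule choq_outer(2)[OF mu Gm G0 GB[OF that]])
  have Phi_le: "Phi f \<mu> a n t \<le> t^2/2*A" if t: "0 < t" for t
  proof -
    have "0 \<le> 1/2 * t powr (2*(\<mu>-2)) * C t" using C0[of t] t by simp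
    then show ?thesis using PhiC[OF t] by linarith
  qed

  obtain \<delta> where d0: "\<delta> > 0" and Fup: "\<And>s. 0 \<le> s \<Longrightarrow> s < \<delta> \<Longrightarrow> prim f s \<le> s powr (\<kappa> + 1)"
    using fp.F_upper[of \<kappa>] ka mu lim by auto
  define e where "e = 2*\<mu> + 2*\<kappa> - 4"
  have e0: "0 < e" using ka by (simp add: e_def)
  define Q where "Q = ((c*V) powr (\<kappa>+1) * (c*V) powr (\<kappa>+1)) * KP \<mu>"
  have small: "t^2 * (A/2 - t powr e * Q) \<le> Phi f \<mu> a n t" if t: "0 < t" "t * (c * V) < \<delta>" for t
  proof -
    define B where "B = (t * (c * V)) powr (\<kappa> + 1)"
    have GB2: "G t y \<le> B * indicator {-1..1} y" for y
    proof (cases "y \<in> {-1..1}")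
      case True
      have tu: "0 \<le> t * u y" "t * u y \<le> t * (c * V)" using t u0[of y] uM[of y] by (auto intro: mult_left_mono)
      have "G t y \<le> (t * u y) powr (\<kappa> + 1)" unfolding G_def by (rule Fup) (use tu t in linarith)+
      also have "\<dots> \<le> B" unfolding B_def using tu ka mu by (intro powr_mono2) auto
      finally show ?thesis using True by simp
    next
      case False
      then have "u y = 0" using us[of y] by auto
      then show ?thesis using False by (simp add: G_def)
    qed
    have "C t \<le> B * KP \<mu> * B * 2" unfolding C_def by (rule choq_outer(3)[OF mu Gm G0 GB2])
    then have "1/2 * t powr (2*(\<mu>-2)) * C t \<le> 1/2 * t powr (2*(\<mu>-2)) * (B * KP \<mu> * B * 2)"
      by (intro mult_left_mono) auto
    also have "\<dots> = t^2 * (t powr e * Q)" unfolding B_def Q_def e_def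
      by (rule alg1[OF t(1) cV])
    finally have X: "1/2 * t powr (2*(\<mu>-2)) * C t \<le> t^2 * (t powr e * Q)" .
    have "t^2 * (A/2 - t powr e * Q) = t^2/2*A - t^2 * (t powr e * Q)" by (simp add: right_diff_distrib)
    then show ?thesis using PhiC[OF t(1)] X by linarith
  qed
  have ev1: "\<forall>\<^sub>F t in at_right 0. 0 < t \<and> t * (c * V) < \<delta> \<and> t powr e * Q < A/2"
  proof (intro eventually_conj)
    show "\<forall>\<^sub>F t in at_right 0. 0 < (t::real)" by (rule eventually_at_right_less)
    have l1: "((\<lambda>t. t * (c * V)) \<longlongrightarrow> 0 * (c * V)) (at_right (0::real))"
      by (intro tendsto_intros)
    show "\<forall>\<^sub>F t in at_right 0. t * (c * V) < \<delta>" using order_tendstoD(2)[OF l1, of \<delta>] d0 by simp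
    have "((\<lambda>t. t powr e) \<longlongrightarrow> 0) (at_right 0)"
      by (rule tendsto_zero_powrI[OF tendsto_ident_at tendsto_const _ e0])
         (rule eventually_mono[OF eventually_at_right_less], simp)
    then have l2: "((\<lambda>t. t powr e * Q) \<longlongrightarrow> 0 * Q) (at_right 0)" by (intro tendsto_intros)
    show "\<forall>\<^sub>F t in at_right 0. t powr e * Q < A/2" using order_tendstoD(2)[OF l2, of "A/2"] A0 by simp
  qed
  then obtain b where b: "b > 0" "\<And>y. 0 < y \<Longrightarrow> y < b \<Longrightarrow> 0 < y \<and> y * (c * V) < \<delta> \<and> y powr e * Q < A/2"
    unfolding eventually_at_right_field by auto
  define t1 where "t1 = b / 2"
  have "0 < t1" "t1 < b" using b(1) by (auto simp: t1_def)
  note t1b = b(2)[OF this]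
  have t1: "0 < t1" "t1 * (c * V) < \<delta>" "t1 powr e * Q < A/2" using t1b by auto
  have Pt1: "0 < Phi f \<mu> a n t1"
  proof -
    have "0 < t1^2 * (A/2 - t1 powr e * Q)" using t1 by simp
    then show ?thesis using small[OF t1(1,2)] by linarith
  qed
  have l3: "((\<lambda>t. t^2/2*A) \<longlongrightarrow> 0^2/2*A) (at_right (0::real))" by (intro tendsto_intros) auto
  have "\<forall>\<^sub>F t in at_right 0. t^2/2*A < Phi f \<mu> a n t1" using order_tendstoD(2)[OF l3, of "Phi f \<mu> a n t1"] Pt1 by simp
  then obtain b0 where b0: "b0 > 0" "\<And>y. 0 < y \<Longrightarrow> y < b0 \<Longrightarrow> y^2/2*A < Phi f \<mu> a n t1"
    unfolding eventually_at_right_field by auto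
  define t0 where "t0 = min b0 t1 / 2"
  have t0: "0 < t0" "t0 \<le> t1" "t0 < b0" using b0 t1 by (auto simp: t0_def)

  define e2 where "e2 = 2*\<mu> + 2*\<theta> - 6"
  have e20: "0 < e2" using th by (simp add: e2_def)
  define Q2 where "Q2 = (prim f 1 * (c*V) powr \<theta> * (2 * (1 / real n)))^2 / 2"
  have Q20: "0 < Q2" unfolding Q2_def using fp.F_pos[of 1] c0 V0 n by simp
  have large: "Phi f \<mu> a n t \<le> t^2 * (A/2 - t powr e2 * Q2)" if t: "0 < t" "1 \<le> t * (c * V)" for t
  proof -
    define c' where "c' = prim f 1 * (t * (c * V)) powr \<theta>"
    have c'0: "0 \<le> c'" unfolding c'_def using fp.F_pos[of 1] by simp
    have Gc: "c' * indicator {-(1/real n)<..<1/real n} y \<le> G t y" for y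
    proof (cases "y \<in> {-(1/real n)<..<1/real n}")
      case True
      then have "u y = c * V" using ul[of y] by (auto simp: abs_less_iff)
      then have "G t y = prim f (t * (c * V))" by (simp add: G_def)
      moreover have "c' \<le> prim f (t * (c * V))" unfolding c'_def by (rule fp.F_lower[OF t(2)])
      ultimately show ?thesis using True by simp
    next
      case False
      then show ?thesis using G0[of t y] by simp
    qed
    have "c' * (2 * (1/real n)) * (c' * (2 * (1/real n))) \<le> C t"
      unfolding C_def by (rule choq_lower[OF mu Gm G0 GB c'0 n2(2) n2(1) Gc]) (use t in simp)
    then have "1/2 * t powr (2*(\<mu>-2)) * (c' * (2 * (1/real n)) * (c' * (2 * (1/real n)))) \<le> 1/2 * t powr (2*(\<mu>-2)) * C t"
      by (intro mult_left_mono) auto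
    moreover have "1/2 * t powr (2*(\<mu>-2)) * (c' * (2 * (1/real n)) * (c' * (2 * (1/real n)))) = t^2 * (t powr e2 * Q2)"
      unfolding c'_def Q2_def e2_def by (rule alg2[OF t(1) cV])
    ultimately have X: "t^2 * (t powr e2 * Q2) \<le> 1/2 * t powr (2*(\<mu>-2)) * C t" by simp
    have "t^2 * (A/2 - t powr e2 * Q2) = t^2/2*A - t^2 * (t powr e2 * Q2)" by (simp add: right_diff_distrib)
    then show ?thesis using PhiC[OF t(1)] X by linarith
  qed
  obtain T0 where T0: "T0 \<ge> 1" "\<And>t. t \<ge> T0 \<Longrightarrow> A / (2 * Q2) < t powr e2"
    using big_powr[OF e20, of "A / (2 * Q2)"] by auto
  define T where "T = max (max T0 (1 / (c * V))) (t1 + 1)"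
  have Tneg: "Phi f \<mu> a n t < 0" if t: "T \<le> t" for t
  proof -
    have tp: "0 < t" using t T0(1) by (simp add: T_def)
    have "1 / (c * V) \<le> t" using t by (simp add: T_def)
    then have "1 \<le> t * (c * V)" using cV by (simp add: divide_le_eq)
    note l = large[OF tp this]
    have "A / (2 * Q2) < t powr e2" using T0(2)[of t] t by (simp add: T_def)
    then have "A / 2 < t powr e2 * Q2" using Q20 by (simp add: divide_less_eq mult_ac)
    then have "t^2 * (A/2 - t powr e2 * Q2) < 0" using tp by (simp add: mult_pos_neg)
    then show ?thesis using l by linarith
  qed

  have t0T: "t0 \<le> T" "t1 \<le> T" using t0 by (auto simp: T_def)
  have contC: "continuous_on {t0..T} C"
  proof (rule continuous_on_sequentiallyI)
    fix x :: "nat \<Rightarrow> real" and s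
    assume xs: "\<forall>k. x k \<in> {t0..T}" and s: "s \<in> {t0..T}" and lim: "x \<longlonglongrightarrow> s"
    have Gb: "G r y \<le> prim f (T * (c * V)) * indicator {-1..1} y" if r: "r \<in> {t0..T}" for r y
    proof -
      have "G r y \<le> prim f (r * (c * V)) * indicator {-1..1} y" using r t0 by (intro GB) auto
      also have "\<dots> \<le> prim f (T * (c * V)) * indicator {-1..1} y"
        using r t0 cV by (intro mult_right_mono fp.F_mono) auto
      finally show ?thesis .
    qed
    show "(\<lambda>k. C (x k)) \<longlonglongrightarrow> C s"
      unfolding C_def
    proof (rule choq_cont[OF mu Gm G0 Gb[OF s] Gm G0 Gb[OF xs[rule_format]]])
      fix y
      have "isCont (prim f) (s * u y)" using prim_deriv[OF f_cont] DERIV_isCont by blast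
      then show "(\<lambda>k. G (x k) y) \<longlonglongrightarrow> G s y"
        unfolding G_def by (rule isCont_tendsto_compose) (intro tendsto_intros lim)
    qed
  qed
  have contPhi: "continuous_on {t0..T} (Phi f \<mu> a n)"
  proof (rule continuous_on_eq)
    show "continuous_on {t0..T} (\<lambda>t. t^2/2*A - 1/2 * t powr (2*(\<mu>-2)) * C t)"
      using t0 by (intro continuous_intros contC) auto
    show "\<And>t. t \<in> {t0..T} \<Longrightarrow> t^2/2*A - 1/2 * t powr (2*(\<mu>-2)) * C t = Phi f \<mu> a n t"
      using t0 by (subst PhiC) auto
  qed
  obtain tn where tn: "tn \<in> {t0..T}" "\<And>t. t \<in> {t0..T} \<Longrightarrow> Phi f \<mu> a n t \<le> Phi f \<mu> a n tn"
    using continuous_attains_sup[OF compact_Icc _ contPhi] t0T by auto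
  have tn1: "Phi f \<mu> a n t1 \<le> Phi f \<mu> a n tn" using tn(2)[of t1] t0 t0T by simp
  show ?thesis
  proof (intro exI[of _ tn] conjI allI impI)
    show "0 < tn" using tn(1) t0 by simp
    show "0 < Phi f \<mu> a n tn" using Pt1 tn1 by simp
    fix t :: real assume t: "0 \<le> t"
    show "Phi f \<mu> a n t \<le> Phi f \<mu> a n tn"
    proof (cases "t = 0")
      case True
      then show ?thesis using Pt1 tn1 by (simp add: Phi_def)
    next
      case False
      then have tp: "0 < t" using t by simp
      show ?thesis
      proof (cases "t < t0")
        case True
        have "Phi f \<mu> a n t \<le> t^2/2*A" by (rule Phi_le[OF tp])
        also have "\<dots> < Phi f \<mu> a n t1" using b0(2)[OF tp] True t0 by simp
        finally show ?thesis using tn1 by simp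
      next
        case F2: False
        show ?thesis
        proof (cases "t \<le> T")
          case True
          then show ?thesis using tn(2) F2 by simp
        next
          case False
          then show ?thesis using Tneg[of t] Pt1 tn1 by simp
        qed
      qed
    qed
  qed
qed

end
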